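(* Let $X$ be a discrete metric space with bounded geometry (balls of radius $r$ have at most $v(r)<\infty$ elements) and let $Y$ be a set. If $A=(a_{y,x})_{(y,x)\in Y\times X}$ is thin-$\emptyset$, then $A^*A$ (when it exists) is banded, i.e. there is $N<\infty$ such that $(A^*A)_{x,x'}=0$ whenever $d(x,x')>N$.
   Context: $A$ is thin-$\emptyset$ if there is $r<\infty$ such that every row $(a_{y,x})_{x\in X}$ has support contained in a ball of radius $r$ in $X$; no condition is imposed on columns. *)

theory Defs
  imports "HOL-Analysis.Analysis"
begin

definition discrete_space :: "'a::metric_space set \<Rightarrow> bool" where
  "discrete_space X \<longleftrightarrow> (\<forall>x\<in>X. \<exists>e>0. ball x e \<inter> X = {x})"

definition bounded_geometry :: "'a::metric_space set \<Rightarrow> bool" where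
  "bounded_geometry X \<longleftrightarrow>
     (\<forall>r::real. \<exists>v::nat. \<forall>x\<in>X. finite (cball x r \<inter> X) \<and> card (cball x r \<inter> X) \<le> v)"

definition thin_empty ::
    "'a::metric_space set \<Rightarrow> 'b set \<Rightarrow> ('b \<Rightarrow> 'a \<Rightarrow> complex) \<Rightarrow> bool" where
  "thin_empty X Y A \<longleftrightarrow>
     (\<exists>r::real. (\<forall>y\<in>Y. \<exists>c\<in>X. {x\<in>X. A y x \<noteq> 0} \<subseteq> cball c r))"

definition adj_mult :: "'b set \<Rightarrow> ('b \<Rightarrow> 'a \<Rightarrow> complex) \<Rightarrow> 'a \<Rightarrow> 'a \<Rightarrow> complex" where
  "adj_mult Y A x x' = infsum (\<lambda>y. cnj (A y x) * A y x') Y"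

definition adj_mult_exists :: "'a set \<Rightarrow> 'b set \<Rightarrow> ('b \<Rightarrow> 'a \<Rightarrow> complex) \<Rightarrow> bool" where
  "adj_mult_exists X Y A \<longleftrightarrow>
     (\<forall>x\<in>X. \<forall>x'\<in>X. (\<lambda>y. cnj (A y x) * A y x') summable_on Y)"

definition banded :: "'a::metric_space set \<Rightarrow> ('a \<Rightarrow> 'a \<Rightarrow> complex) \<Rightarrow> bool" where
  "banded X B \<longleftrightarrow> (\<exists>N::real. \<forall>x\<in>X. \<forall>x'\<in>X. dist x x' > N \<longrightarrow> B x x' = 0)"

end

theory Submission
  imports Defs
begin

theorem proposition3p2:
  fixes X :: "'a::metric_space set" and Y :: "'b set" and A :: "'b \<Rightarrow> 'a \<Rightarrow> complex"
  assumes "discrete_space X"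
    and "bounded_geometry X"
    and "thin_empty X Y A"
    and "adj_mult_exists X Y A"
  shows "banded X (adj_mult Y A)"
proof -
  obtain r where r: "\<forall>y\<in>Y. \<exists>c\<in>X. {x\<in>X. A y x \<noteq> 0} \<subseteq> cball c r"
    using assms(3) unfolding thin_empty_def by blast
  show ?thesis unfolding banded_def
  proof (intro exI[of _ "2*r"] ballI impI)
    fix x x' assume x: "x \<in> X" and x': "x' \<in> X" and d: "dist x x' > 2*r"
    have "\<forall>y\<in>Y. cnj (A y x) * A y x' = 0"
    proof
      fix y assume "y \<in> Y"
      then obtain c where c: "{x\<in>X. A y x \<noteq> 0} \<subseteq> cball c r" using r by blast
      show "cnj (A y x) * A y x' = 0"
      proof (rule ccontr)
        assume "cnj (A y x) * A y x' \<noteq> 0"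
        then have "A y x \<noteq> 0" "A y x' \<noteq> 0" by auto
        then have "dist c x \<le> r" "dist c x' \<le> r" using c x x' by auto
        then have "dist x x' \<le> 2*r" using dist_triangle3[of x x' c] by linarith
        then show False using d by simp
      qed
    qed
    then show "adj_mult Y A x x' = 0" unfolding adj_mult_def
      by (simp add: infsum_0)
  qed
qed

end
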